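(* Let $t$ be a positive integer, $s\ge 2$, and let $G=K(n_1,\dots,n_s)$ be a complete $s$-partite graph with parts $V_1,\dots,V_s$, $|V_j|=n_j$. Let $f$ be a $t$-relaxed coloring of $G$. If a color $i$ appears on exactly $r\ge 2$ parts of $G$ (i.e. exactly $r$ parts contain a vertex $v$ with $f(v)=i$), then $|f^{-1}(i)|\le t+\left\lfloor \frac{t}{r-1}\right\rfloor$.
   Context: $K(n_1,\dots,n_s)$ denotes the complete $s$-partite graph whose parts have $n_1,\dots,n_s\ge 1$ vertices. A map $f$ from $V(G)$ to a finite set of colors is a $t$-relaxed coloring if every vertex $u$ has at most $t$ neighbors $v$ with $f(v)=f(u)$. $f^{-1}(i)$ is the set of vertices receiving color $i$. *)

theory Defs
  imports Main
begin

definition cmp_parts :: "nat \<Rightarrow> (nat \<Rightarrow> 'a set) \<Rightarrow> bool" where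
  "cmp_parts s V \<longleftrightarrow>
     (\<forall>j<s. finite (V j) \<and> V j \<noteq> {}) \<and>
     (\<forall>j<s. \<forall>k<s. j \<noteq> k \<longrightarrow> V j \<inter> V k = {})"

definition cmp_vertices :: "nat \<Rightarrow> (nat \<Rightarrow> 'a set) \<Rightarrow> 'a set" where
  "cmp_vertices s V = (\<Union>j<s. V j)"

definition cmp_adj :: "nat \<Rightarrow> (nat \<Rightarrow> 'a set) \<Rightarrow> 'a \<Rightarrow> 'a \<Rightarrow> bool" where
  "cmp_adj s V u v \<longleftrightarrow>
     u \<in> cmp_vertices s V \<and> v \<in> cmp_vertices s V \<and>
     (\<forall>j<s. \<not> (u \<in> V j \<and> v \<in> V j))"

definition relaxed_coloring ::
    "'a set \<Rightarrow> ('a \<Rightarrow> 'a \<Rightarrow> bool) \<Rightarrow> nat \<Rightarrow> ('a \<Rightarrow> 'c) \<Rightarrow> bool" where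
  "relaxed_coloring Vs adj t f \<longleftrightarrow>
     (\<forall>u\<in>Vs. card {v\<in>Vs. adj u v \<and> f v = f u} \<le> t)"

end

theory Submission
  imports Defs
begin

theorem lemma2p1:
  fixes s t r :: nat and V :: "nat \<Rightarrow> 'a set" and f :: "'a \<Rightarrow> 'c" and i :: 'c
  assumes "t \<ge> 1" and "s \<ge> 2"
    and "cmp_parts s V"
    and "relaxed_coloring (cmp_vertices s V) (cmp_adj s V) t f"
    and "card {j. j < s \<and> (\<exists>v\<in>V j. f v = i)} = r"
    and "r \<ge> 2"
  shows "card {v \<in> cmp_vertices s V. f v = i} \<le> t + t div (r - 1)"
proof -
  define C where "C = {v \<in> cmp_vertices s V. f v = i}"
  define J where "J = {j. j < s \<and> (\<exists>v\<in>V j. f v = i)}"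
  define A where "A j = V j \<inter> {v. f v = i}" for j
  define N where "N = card C"
  have fin: "\<And>j. j < s \<Longrightarrow> finite (V j)" and disj: "\<And>j k. j < s \<Longrightarrow> k < s \<Longrightarrow> j \<noteq> k \<Longrightarrow> V j \<inter> V k = {}"
    using assms(3) unfolding cmp_parts_def by auto
  have finJ: "finite J" unfolding J_def by auto
  have cardJ: "card J = r" using assms(5) J_def by simp
  have finC: "finite C" unfolding C_def cmp_vertices_def using fin by auto
  have CU: "C = (\<Union>j\<in>J. A j)" unfolding C_def J_def A_def cmp_vertices_def by auto
  have finA: "\<And>j. j \<in> J \<Longrightarrow> finite (A j)" unfolding A_def J_def using fin by auto
  have NS: "N = (\<Sum>j\<in>J. card (A j))"
    unfolding N_def CU
    apply (rule card_UN_disjoint[OF finJ])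
    using finA apply blast
    unfolding A_def J_def using disj by blast
  have AC: "\<And>j. j \<in> J \<Longrightarrow> A j \<subseteq> C" using CU by auto
  have bound: "N - card (A j) \<le> t" if jJ: "j \<in> J" for j
  proof -
    obtain v where v: "v \<in> V j" "f v = i" and js: "j < s" using jJ unfolding J_def by auto
    have vV: "v \<in> cmp_vertices s V" using v js unfolding cmp_vertices_def by auto
    have eq: "{w \<in> cmp_vertices s V. cmp_adj s V v w \<and> f w = f v} = C - A j"
    proof (rule set_eqI, rule iffI)
      fix w assume w: "w \<in> {w \<in> cmp_vertices s V. cmp_adj s V v w \<and> f w = f v}"
      then have "w \<notin> V j" using v js unfolding cmp_adj_def by auto
      then show "w \<in> C - A j" using w v unfolding C_def A_def by auto
    next
      fix w assume w: "w \<in> C - A j"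
      then have wV: "w \<in> cmp_vertices s V" "f w = i" "w \<notin> V j" unfolding C_def A_def by auto
      have "\<forall>k<s. \<not> (v \<in> V k \<and> w \<in> V k)"
      proof (intro allI impI notI)
        fix k assume "k < s" "v \<in> V k \<and> w \<in> V k"
        then show False using disj[OF js, of k] v wV by (cases "k = j") auto
      qed
      then show "w \<in> {w \<in> cmp_vertices s V. cmp_adj s V v w \<and> f w = f v}"
        using wV vV v unfolding cmp_adj_def by auto
    qed
    have "card (C - A j) \<le> t" using assms(4) vV v unfolding relaxed_coloring_def eq[symmetric] by auto
    moreover have "card (C - A j) = N - card (A j)"
      unfolding N_def using card_Diff_subset[OF finA[OF jJ] AC[OF jJ]] .
    ultimately show ?thesis by simp
  qed
  have "r * N = (\<Sum>j\<in>J. (N - card (A j)) + card (A j))"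
  proof -
    have "\<And>j. j \<in> J \<Longrightarrow> card (A j) \<le> N"
      unfolding N_def using card_mono[OF finC AC] by blast
    then have "(\<Sum>j\<in>J. (N - card (A j)) + card (A j)) = (\<Sum>j\<in>J. N)" by (intro sum.cong) auto
    then show ?thesis using cardJ by simp
  qed
  also have "\<dots> = (\<Sum>j\<in>J. (N - card (A j))) + N" unfolding sum.distrib NS ..
  also have "\<dots> \<le> r * t + N"
  proof -
    have "(\<Sum>j\<in>J. (N - card (A j))) \<le> (\<Sum>j\<in>J. t)" using bound by (intro sum_mono) auto
    then show ?thesis using cardJ by simp
  qed
  finally have key: "r * N \<le> r * t + N" .
  have "(N - t) * (r - 1) \<le> t"
  proof -
    have "r * N = (r - 1) * N + N" "r * t = (r - 1) * t + t" 
      using assms(6) by (cases r; simp)+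
    with key have "(r - 1) * N \<le> (r - 1) * t + t" by simp
    then show ?thesis by (simp add: diff_mult_distrib mult.commute)
  qed
  then have "N - t \<le> t div (r - 1)" using assms(6)
    by (simp add: less_eq_div_iff_mult_less_eq)
  then show ?thesis unfolding N_def C_def by simp
qed

end
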